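(* For all real $0\le a\le b\le 1$ and all $\epsilon\in(0,\tfrac12)$, $$\frac{(\sqrt b+\sqrt a)^{2(1+\epsilon)}+(\sqrt b-\sqrt a)^{2(1+\epsilon)}}{2}-a^{1+\epsilon}-b^{1+\epsilon}\ge (b^\epsilon-a^\epsilon)a.$$ *)

theory Defs
  imports Complex_Main
begin

end

theory Submission
  imports Defs "HOL-Analysis.Analysis"
begin

lemma sq_powr: "(x::real) \<ge> 0 \<Longrightarrow> x powr (2*p) = (x^2) powr p"
proof (cases "x = 0")
  case True then show ?thesis by simp
next
  case False
  assume "x \<ge> 0"
  then have x: "x > 0" using False by simp
  have "x powr (2*p) = (x powr 2) powr p" by (simp add: powr_powr)
  also have "x powr 2 = x^2" using powr_realpow[OF x, of 2] by simp
  finally show ?thesis .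
qed

theorem mainTheorem6:
  fixes a b \<epsilon> :: real
  assumes "0 \<le> a" "a \<le> b" "b \<le> 1" "0 < \<epsilon>" "\<epsilon> < 1/2"
  shows "((sqrt b + sqrt a) powr (2 * (1 + \<epsilon>)) + (sqrt b - sqrt a) powr (2 * (1 + \<epsilon>))) / 2
           - a powr (1 + \<epsilon>) - b powr (1 + \<epsilon>) \<ge> (b powr \<epsilon> - a powr \<epsilon>) * a"
proof -
  define p where "p = 1 + \<epsilon>"
  define u where "u = (sqrt b + sqrt a)^2"
  define v where "v = (sqrt b - sqrt a)^2"
  have sa: "sqrt a \<le> sqrt b" "0 \<le> sqrt a" using assms by auto
  have e1: "(sqrt b + sqrt a) powr (2 * p) = u powr p"
    unfolding u_def using sa by (intro sq_powr) auto
  have e2: "(sqrt b - sqrt a) powr (2 * p) = v powr p"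
    unfolding v_def using sa by (intro sq_powr) auto
  have uv: "(u + v)/2 = a + b" unfolding u_def v_def using assms
    by (simp add: power2_eq_square algebra_simps)
  have apow: "a powr p = a * a powr \<epsilon>" "b powr p = b * b powr \<epsilon>"
    unfolding p_def using assms by (auto simp: powr_add)
  have key: "(a+b) powr p \<ge> b powr p + a * b powr \<epsilon>"
  proof -
    have "(a+b) powr p = (a+b) * (a+b) powr \<epsilon>"
      unfolding p_def using assms by (auto simp: powr_add)
    also have "\<dots> \<ge> (a+b) * b powr \<epsilon>"
      using assms by (intro mult_left_mono powr_mono2) auto
    finally show ?thesis using apow by (simp add: algebra_simps)
  qed
  have conv: "(u powr p + v powr p)/2 \<ge> (a+b) powr p"
  proof (cases "a = b")
    case True
    then have "v = 0" unfolding v_def by simp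
    have "u = 4 * a" unfolding u_def using True assms
      by (simp add: power2_eq_square)
    have A: "a powr p \<ge> 0" by simp
    have "(4*a) powr p = 4 powr p * a powr p" using assms by (simp add: powr_mult)
    moreover have "(a+b) powr p = 2 powr p * a powr p" using True assms by (simp add: powr_mult)
    moreover have "4 powr p = 2 powr p * 2 powr p"
      by (metis powr_mult mult_2 numeral_Bit0 less_le zero_less_numeral)
    moreover have t: "2 powr p \<ge> 2" using powr_mono[of 1 p 2] unfolding p_def using assms by auto
    moreover have "2 powr p * 2 powr p / 2 \<ge> 2 powr p" using t by (simp add: field_simps)
    ultimately have "((4*a) powr p)/2 \<ge> (a+b) powr p"
    proof -
      assume h1: "(4*a) powr p = 4 powr p * a powr p" and h2: "(a+b) powr p = 2 powr p * a powr p"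
        and h3: "4 powr p = 2 powr p * 2 powr p" and h4: "2 powr p \<ge> 2"
        and h5: "2 powr p * 2 powr p / 2 \<ge> 2 powr p"
      have "2 powr p * a powr p \<le> (2 powr p * 2 powr p / 2) * a powr p"
        using mult_right_mono[OF h5 A] .
      then show ?thesis using h1 h2 h3 by simp
    qed
    then show ?thesis using \<open>v = 0\<close> \<open>u = 4*a\<close> by simp
  next
    case False
    then have ab: "a < b" using assms by auto
    then have "sqrt a < sqrt b" by simp
    then have vpos: "v > 0" unfolding v_def by simp
    have upos: "u > 0" unfolding u_def using \<open>sqrt a < sqrt b\<close> sa
      by (metis add_pos_nonneg le_less_trans zero_less_power)
    have "((1 - 1/2) *\<^sub>R u + (1/2) *\<^sub>R v) powr p \<le> (1 - 1/2) * u powr p + (1/2) * v powr p"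
      using convex_onD[OF powr_convex[of p], of "1/2" u v] upos vpos unfolding p_def using assms by auto
    then show ?thesis using uv by (simp add: field_simps)
  qed
  show ?thesis using conv key apow e1 e2 unfolding p_def by (simp add: algebra_simps)
qed

end
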